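(* Let $\mathcal M$ be a time-dependent finite-horizon MDP accessed through the quantum oracle $O_{\mathcal{QM}}$, and let $\delta\in(0,1)$. The algorithm QVI-1 described in the context makes $O\bigl(S^2\sqrt A\,H\log(SH/\delta)\bigr)$ queries to $O_{\mathcal{QM}}$.
   Context: Write $[H]=\{0,\dots,H-1\}$. The MDP $\mathcal M=(\mathcal S,\mathcal A,\{P_h\}_{h\in[H]},\{r_h\}_{h\in[H]},H)$ has finite state space $\mathcal S$ with $S=|\mathcal S|$, finite action space $\mathcal A$ with $A=|\mathcal A|$, rewards $r_h(s,a)\in[0,1]$, and transition distributions $P_h(\cdot\mid s,a)$. Write $P_{h|s,a}$ for the vector $(P_h(s'\mid s,a))_{s'\in\mathcal S}$. Real numbers are stored in fixed-point binary with no overflow; $\overline{x}$ denotes the stored representation of $x$. A binary oracle for $f\in\mathbb R^N$ is a unitary $|i\rangle|0\rangle\mapsto|i\rangle|\overline{f(i)}\rangle$. The quantum oracle of $\mathcal M$ is the unitary $O_{\mathcal{QM}}:|s\rangle|a\rangle|h\rangle|s'\rangle|0\rangle|0\rangle\mapsto|s\rangle|a\rangle|h\rangle|s'\rangle|\overline{r_h(s,a)}\rangle|\overline{P_h(s'\mid s,a)}\rangle$. Query complexity counts uses of $O_{\mathcal{QM}}$ and its inverse. QMS is a subroutine which, given a binary oracle for $f\in\mathbb R^N$ and $\zeta>0$, outputs an index of a maximum entry with probability at least $1-\zeta$, using at most $\tilde c\sqrt N\log(1/\zeta)$ oracle queries, where $\tilde c>0$ is a constant. Algorithm QVI-1$(\mathcal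 M,\delta)$: - Set $\zeta=\delta/(SH)$ and $\hat V_H=\mathbf 0$. - For $h=H-1,\dots,0$: - Build a binary oracle for the classical vector $\hat V_{h+1}$. - For each $s$, build a binary oracle for $\hat Q_{h,s}(a)=r_h(s,a)+\sum_{s'}P_h(s'\mid s,a)\hat V_{h+1}(s')$. This is computed coherently with quantum arithmetic from $O_{\mathcal{QM}}$ and the oracle for $\hat V_{h+1}$. - For each $s$, set $\hat\pi(s,h)$ to the output of QMS with failure parameter $\zeta$ on $\hat Q_{h,s}$ over $a\in\mathcal A$. - For each $s$, set $\hat V_h(s)=\hat Q_{h,s}(\hat\pi(s,h))$. - Return $\hat\pi$ and $\hat V_0$. *)

theory Defs
  imports Complex_Main
begin

text \<open>
  States are \<open>{0..<S}\<close>, actions are \<open>{0..<A}\<close>, stages are \<open>{0..<H}\<close>.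
  The MDP is given by reward function \<open>r h s a\<close> and transition probabilities
  \<open>P h s a s'\<close> = P_h(s' | s, a).
\<close>

definition is_finite_MDP ::
  "nat \<Rightarrow> nat \<Rightarrow> nat \<Rightarrow> (nat \<Rightarrow> nat \<Rightarrow> nat \<Rightarrow> real) \<Rightarrow> (nat \<Rightarrow> nat \<Rightarrow> nat \<Rightarrow> nat \<Rightarrow> real) \<Rightarrow> bool"
  where "is_finite_MDP S A H r P \<longleftrightarrow>
     (\<forall>h<H. \<forall>s<S. \<forall>a<A.
        0 \<le> r h s a \<and> r h s a \<le> 1 \<and>
        (\<forall>s'<S. 0 \<le> P h s a s') \<and> (\<Sum>s'<S. P h s a s') = 1)"

text \<open>
  Abstract model of the quantum maximum-search subroutine QMS.  A call
  \<open>qms h s f N \<zeta>\<close> (the arguments \<open>h s\<close> only identify the call, modelling independent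
  internal randomness of different calls) searches the binary oracle of \<open>f\<close> over
  indices \<open>{0..<N}\<close> with failure parameter \<open>\<zeta>\<close>, and returns the output index together
  with the number of oracle queries it used.  The admissibility condition is the
  query bound \<open>c * sqrt N * log(1/\<zeta>)\<close> (its output lies in the index range; the
  probabilistic correctness guarantee is irrelevant to query counting).
\<close>

definition is_QMS ::
  "real \<Rightarrow> (nat \<Rightarrow> nat \<Rightarrow> (nat \<Rightarrow> real) \<Rightarrow> nat \<Rightarrow> real \<Rightarrow> nat \<times> nat) \<Rightarrow> bool"
  where "is_QMS c qms \<longleftrightarrow>
     (\<forall>h s f N \<zeta>. 0 < N \<longrightarrow> 0 < \<zeta> \<longrightarrow> \<zeta> < 1 \<longrightarrow>
        fst (qms h s f N \<zeta>) < N \<and>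
        real (snd (qms h s f N \<zeta>)) \<le> c * sqrt (real N) * ln (1 / \<zeta>))"

definition Qhat ::
  "nat \<Rightarrow> (nat \<Rightarrow> nat \<Rightarrow> nat \<Rightarrow> real) \<Rightarrow> (nat \<Rightarrow> nat \<Rightarrow> nat \<Rightarrow> nat \<Rightarrow> real) \<Rightarrow> (nat \<Rightarrow> real)
    \<Rightarrow> nat \<Rightarrow> nat \<Rightarrow> nat \<Rightarrow> real"
  where "Qhat S r P V h s a = r h s a + (\<Sum>s'<S. P h s a s' * V s')"

text \<open>
  Number of uses of O_QM (or its inverse) per use of the binary oracle for Q-hat_{h,s}:
  for each of the S next states s' one query of O_QM yields r_h(s,a) and P_h(s'|s,a),
  which are accumulated coherently; afterwards the S queries are undone with the
  inverse oracle.
\<close>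

definition qoracle_cost :: "nat \<Rightarrow> nat" where "qoracle_cost S = 2 * S"

text \<open>Classically evaluating V-hat_h(s) = Q-hat_{h,s}(pi(s,h)) uses S queries of O_QM.\<close>

definition qeval_cost :: "nat \<Rightarrow> nat" where "qeval_cost S = S"

text \<open>
  The backward loop of QVI-1.  \<open>qvi1_loop \<dots> k\<close> is the state after processing stages
  H-1, ..., H-k: the current value vector V-hat_{H-k}, the policy pi (indexed as pi s h),
  and the total number of queries to O_QM made so far.
\<close>

primrec qvi1_loop ::
  "nat \<Rightarrow> nat \<Rightarrow> nat \<Rightarrow> (nat \<Rightarrow> nat \<Rightarrow> nat \<Rightarrow> real) \<Rightarrow> (nat \<Rightarrow> nat \<Rightarrow> nat \<Rightarrow> nat \<Rightarrow> real)
    \<Rightarrow> real \<Rightarrow> (nat \<Rightarrow> nat \<Rightarrow> (nat \<Rightarrow> real) \<Rightarrow> nat \<Rightarrow> real \<Rightarrow> nat \<times> nat) \<Rightarrow> nat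
    \<Rightarrow> (nat \<Rightarrow> real) \<times> (nat \<Rightarrow> nat \<Rightarrow> nat) \<times> nat"
  where
  "qvi1_loop S A H r P \<zeta> qms 0 = ((\<lambda>_. 0), (\<lambda>_ _. 0), 0)"
| "qvi1_loop S A H r P \<zeta> qms (Suc k) =
     (case qvi1_loop S A H r P \<zeta> qms k of (V, \<pi>, q) \<Rightarrow>
       (let h = H - Suc k;
            out = (\<lambda>s. qms h s (Qhat S r P V h s) A \<zeta>);
            \<pi>' = (\<lambda>s' h'. if h' = h \<and> s' < S then fst (out s') else \<pi> s' h');
            V' = (\<lambda>s. Qhat S r P V h s (fst (out s)));
            q' = q + (\<Sum>s<S. snd (out s) * qoracle_cost S + qeval_cost S)
        in (V', \<pi>', q')))"

definition qvi1 ::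
  "nat \<Rightarrow> nat \<Rightarrow> nat \<Rightarrow> (nat \<Rightarrow> nat \<Rightarrow> nat \<Rightarrow> real) \<Rightarrow> (nat \<Rightarrow> nat \<Rightarrow> nat \<Rightarrow> nat \<Rightarrow> real)
    \<Rightarrow> real \<Rightarrow> (nat \<Rightarrow> nat \<Rightarrow> (nat \<Rightarrow> real) \<Rightarrow> nat \<Rightarrow> real \<Rightarrow> nat \<times> nat)
    \<Rightarrow> (nat \<Rightarrow> real) \<times> (nat \<Rightarrow> nat \<Rightarrow> nat) \<times> nat"
  where "qvi1 S A H r P \<delta> qms = qvi1_loop S A H r P (\<delta> / (real S * real H)) qms H"

definition qvi1_queries ::
  "nat \<Rightarrow> nat \<Rightarrow> nat \<Rightarrow> (nat \<Rightarrow> nat \<Rightarrow> nat \<Rightarrow> real) \<Rightarrow> (nat \<Rightarrow> nat \<Rightarrow> nat \<Rightarrow> nat \<Rightarrow> real)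
    \<Rightarrow> real \<Rightarrow> (nat \<Rightarrow> nat \<Rightarrow> (nat \<Rightarrow> real) \<Rightarrow> nat \<Rightarrow> real \<Rightarrow> nat \<times> nat) \<Rightarrow> nat"
  where "qvi1_queries S A H r P \<delta> qms = snd (snd (qvi1 S A H r P \<delta> qms))"

end

theory Submission
  imports Defs
begin

lemma loop_step:
  "snd (snd (qvi1_loop S A H r P z qms (Suc k))) = snd (snd (qvi1_loop S A H r P z qms k)) +
     (\<Sum>s<S. snd (qms (H - Suc k) s (Qhat S r P (fst (qvi1_loop S A H r P z qms k)) (H - Suc k) s) A z)
        * qoracle_cost S + qeval_cost S)"
  by (simp add: Let_def split: prod.split)

lemma loop_bound:
  assumes q: "is_QMS c qms" and A: "0 < A" and z: "0 < z" "z < 1"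
  shows "real (snd (snd (qvi1_loop S A H r P z qms k)))
           \<le> real k * (real S * (c * sqrt (real A) * ln (1 / z) * (2 * real S) + real S))"
proof (induction k)
  case 0 then show ?case by simp
next
  case (Suc k)
  let ?B = "c * sqrt (real A) * ln (1 / z) * (2 * real S) + real S"
  have each: "real (snd (qms h s f A z) * qoracle_cost S + qeval_cost S) \<le> ?B" for h s f
  proof -
    have "real (snd (qms h s f A z)) \<le> c * sqrt (real A) * ln (1 / z)"
      using q A z unfolding is_QMS_def by auto
    then have "real (snd (qms h s f A z)) * (2 * real S) \<le> c * sqrt (real A) * ln (1 / z) * (2 * real S)"
      by (intro mult_right_mono) auto
    then show ?thesis by (simp add: qoracle_cost_def qeval_cost_def)
  qed
  have "real (\<Sum>s<S. snd (qms (H - Suc k) s (Qhat S r P (fst (qvi1_loop S A H r P z qms k)) (H - Suc k) s) A z)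
        * qoracle_cost S + qeval_cost S) \<le> (\<Sum>s<S. ?B)"
    unfolding of_nat_sum by (intro sum_mono each)
  also have "\<dots> = real S * ?B" by simp
  finally show ?case using Suc.IH unfolding loop_step of_nat_add by (simp add: algebra_simps)
qed

theorem theorem3p6:
  fixes c :: real
  assumes "c > 0"
  shows "\<exists>C>0. \<forall>S A H r P \<delta> qms.
     0 < S \<longrightarrow> 0 < A \<longrightarrow> is_finite_MDP S A H r P \<longrightarrow>
     0 < \<delta> \<longrightarrow> \<delta> < 1 \<longrightarrow> is_QMS c qms \<longrightarrow>
     real (qvi1_queries S A H r P \<delta> qms)
       \<le> C * (real S ^ 2 * sqrt (real A) * real H * max 1 (ln (real S * real H / \<delta>)))"
proof (intro exI[of _ "2 * c + 1"] conjI allI impI)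
  show "0 < 2 * c + 1" using assms by simp
  fix S A H :: nat and r P and \<delta> :: real and qms
  assume S: "0 < S" and A: "0 < A" and "is_finite_MDP S A H r P" and d: "0 < \<delta>" "\<delta> < 1"
    and q: "is_QMS c qms"
  show "real (qvi1_queries S A H r P \<delta> qms)
       \<le> (2 * c + 1) * (real S ^ 2 * sqrt (real A) * real H * max 1 (ln (real S * real H / \<delta>)))"
  proof (cases "H = 0")
    case True then show ?thesis by (simp add: qvi1_queries_def qvi1_def)
  next
    case False
    define z where "z = \<delta> / (real S * real H)"
    define L where "L = ln (real S * real H / \<delta>)"
    have S1': "1 \<le> real S" using S by simp
    have H1': "1 \<le> real H" using False by simp
    have "1 * 1 \<le> real S * real H" by (rule mult_mono[OF S1' H1']) auto
    then have SH: "real S * real H \<ge> 1" by simp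
    have z0: "0 < z" using d S False by (simp add: z_def)
    have z1: "z < 1" using d SH by (simp add: z_def field_simps)
    have Lz: "ln (1 / z) = L" by (simp add: z_def L_def)
    have L0: "0 \<le> L" unfolding L_def using SH d by (simp add: field_simps)
    have sA: "1 \<le> sqrt (real A)" using A by simp
    have S1: "real S \<le> real S ^ 2" using S by (simp add: power2_eq_square)
    let ?M = "max 1 L"
    have "real (qvi1_queries S A H r P \<delta> qms)
        \<le> real H * (real S * (c * sqrt (real A) * L * (2 * real S) + real S))"
      using loop_bound[OF q A z0 z1, of S H r P H] Lz
      by (simp add: qvi1_queries_def qvi1_def z_def)
    also have "\<dots> = real H * (2 * c * (real S ^ 2 * sqrt (real A) * L) + real S * real S)"
      by (simp add: power2_eq_square algebra_simps)
    also have "\<dots> \<le> real H * (2 * c * (real S ^ 2 * sqrt (real A) * ?M) + real S ^ 2 * sqrt (real A) * ?M)"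
    proof -
      have "real S ^ 2 * sqrt (real A) * L \<le> real S ^ 2 * sqrt (real A) * ?M"
        by (intro mult_left_mono) auto
      moreover have "real S * real S \<le> real S ^ 2 * sqrt (real A) * ?M"
      proof -
        have "real S * real S = real S ^ 2 * 1 * 1" by (simp add: power2_eq_square)
        also have "\<dots> \<le> real S ^ 2 * sqrt (real A) * ?M"
          by (intro mult_mono sA) auto
        finally show ?thesis .
      qed
      ultimately show ?thesis using assms
        by (intro mult_left_mono add_mono) auto
    qed
    also have "\<dots> = (2 * c + 1) * (real S ^ 2 * sqrt (real A) * real H * ?M)"
      by (simp add: algebra_simps)
    finally show ?thesis unfolding L_def .
  qed
qed

end
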